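(* Fix $x>0$, $t>0$, and $v\in(0,1]$, and let $a(y)=1-ve^{-y}$ for $y\in\mathbb{R}$. Then the function $y\mapsto a(x-y)\exp(-vte^{-y})$ is unimodal on $\mathbb{R}$ with maximum at $$y^*=\log\left(-vt+\sqrt{v^2t^2+4te^{x}}\right)-\log 2.$$ Moreover, for any fixed $A>0$, the function $y\mapsto a(y)[1+A\,a(x-y)]$ is unimodal on $\mathbb{R}$ with maximum at $y^*=[x+\log(1+A^{-1})]/2$. *)

theory Defs
  imports Complex_Main
begin

definition unimodal_max_at :: "(real \<Rightarrow> real) \<Rightarrow> real \<Rightarrow> bool" where
  "unimodal_max_at f m \<longleftrightarrow>
     (\<forall>a b. a < b \<and> b \<le> m \<longrightarrow> f a < f b) \<and>
     (\<forall>a b. m \<le> a \<and> a < b \<longrightarrow> f b < f a)"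

end

theory Submission
  imports Defs
begin

lemma unimodal_from_deriv:
  fixes f f' :: "real \<Rightarrow> real"
  assumes d: "\<And>y. (f has_real_derivative f' y) (at y)"
    and p: "\<And>y. y < m \<Longrightarrow> f' y > 0"
    and n: "\<And>y. y > m \<Longrightarrow> f' y < 0"
  shows "unimodal_max_at f m"
proof -
  have c: "continuous_on S f" for S
    using d by (meson DERIV_continuous continuous_at_imp_continuous_on)
  show ?thesis unfolding unimodal_max_at_def
  proof (intro conjI allI impI)
    fix a b :: real assume "a < b \<and> b \<le> m"
    then show "f a < f b"
      by (intro DERIV_pos_imp_increasing_open[of a b f]) (auto intro!: c d p)
  next
    fix a b :: real assume "m \<le> a \<and> a < b"
    then show "f b < f a"
      by (intro DERIV_neg_imp_decreasing_open[of a b f]) (auto intro!: c d n)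
  qed
qed

lemma part1:
  fixes x t v :: real
  assumes "t > 0" and "0 < v"
  shows "unimodal_max_at (\<lambda>y. (1 - v * exp (- (x - y))) * exp (- v * t * exp (- y)))
           (ln (- v * t + sqrt (v\<^sup>2 * t\<^sup>2 + 4 * t * exp x)) - ln 2)"
proof (rule unimodal_from_deriv)
  fix y
  show "((\<lambda>y. (1 - v * exp (- (x - y))) * exp (- v * t * exp (- y))) has_real_derivative
     (v * exp (- v * t * exp (- y)) * exp (-x) * exp (-y) * (t * exp x - exp y ^ 2 - v * t * exp y))) (at y)"
    apply (rule derivative_eq_intros refl | simp)+
    apply (simp add: algebra_simps exp_diff exp_minus power2_eq_square field_simps)
    done
next
  define D where "D = sqrt (v\<^sup>2 * t\<^sup>2 + 4 * t * exp x)"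
  have D2: "D^2 = v\<^sup>2 * t\<^sup>2 + 4 * t * exp x" unfolding D_def
    using assms by (simp add: add_nonneg_nonneg)
  have Dg: "D > v * t" unfolding D_def
    using assms by (intro real_less_rsqrt) (auto simp: power_mult_distrib)
  define S where "S = (- v * t + D) / 2"
  have Sp: "S > 0" using Dg unfolding S_def by simp
  have em: "exp (ln (- v * t + sqrt (v\<^sup>2 * t\<^sup>2 + 4 * t * exp x)) - ln 2) = S"
    using Sp unfolding S_def D_def by (simp add: exp_diff)
  have fac: "t * exp x - s ^ 2 - v * t * s = - ((s - S) * (s + v*t + S))" for s
    unfolding S_def using D2 by (simp add: algebra_simps power2_eq_square) (simp add: field_simps)
  have pos: "0 < v * exp (- v * t * exp (- y)) * exp (-x) * exp (-y)" for y
    using assms by simp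
  {
    fix y assume "y < ln (- v * t + sqrt (v\<^sup>2 * t\<^sup>2 + 4 * t * exp x)) - ln 2"
    hence "exp y < S" using em by (metis exp_less_cancel_iff)
    moreover have "exp y + v * t + S > 0" using Sp assms by (simp add: add_pos_pos)
    ultimately have "t * exp x - exp y ^ 2 - v * t * exp y > 0" unfolding fac
      by (simp add: mult_neg_pos)
    then show "0 < v * exp (- v * t * exp (- y)) * exp (-x) * exp (-y) * (t * exp x - exp y ^ 2 - v * t * exp y)"
      using pos by simp
  }
  {
    fix y assume "y > ln (- v * t + sqrt (v\<^sup>2 * t\<^sup>2 + 4 * t * exp x)) - ln 2"
    hence "exp y > S" using em by (metis exp_less_cancel_iff)
    moreover have "exp y + v * t + S > 0" using Sp assms by (simp add: add_pos_pos)
    ultimately have "t * exp x - exp y ^ 2 - v * t * exp y < 0" unfolding fac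
      by (simp add: mult_pos_pos)
    then show "v * exp (- v * t * exp (- y)) * exp (-x) * exp (-y) * (t * exp x - exp y ^ 2 - v * t * exp y) < 0"
      using pos by (simp add: mult_pos_neg)
  }
qed

lemma part2:
  fixes x v A :: real
  assumes "0 < v" and "A > 0"
  shows "unimodal_max_at (\<lambda>y. (1 - v * exp (- y)) * (1 + A * (1 - v * exp (- (x - y)))))
             ((x + ln (1 + 1 / A)) / 2)"
proof (rule unimodal_from_deriv)
  fix y
  show "((\<lambda>y. (1 - v * exp (- y)) * (1 + A * (1 - v * exp (- (x - y))))) has_real_derivative
     (v * exp (-y) * exp (-x) * ((1 + A) * exp x - A * exp (2*y)))) (at y)"
    apply (rule derivative_eq_intros refl | simp)+
    apply (simp add: algebra_simps exp_diff exp_minus exp_add mult_exp_exp[symmetric] field_simps)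
    apply (simp add: mult_exp_exp)
    done
next
  have "2 * ((x + ln (1 + 1 / A)) / 2) = x + ln (1 + 1 / A)" by simp
  hence em: "exp (2 * ((x + ln (1 + 1 / A)) / 2)) = exp x * (1 + 1/A)"
    using assms by (simp only: exp_add) (simp add: add_pos_pos)
  have eq: "(1 + A) * exp x - A * exp (2*y) = A * (exp x * (1 + 1/A) - exp (2*y))" for y
    using assms by (simp add: field_simps)
  have pos: "0 < v * exp (-y) * exp (-x)" for y using assms by simp
  {
    fix y assume "y < (x + ln (1 + 1 / A)) / 2"
    hence "exp (2*y) < exp x * (1 + 1/A)" using em by (metis exp_less_cancel_iff mult_strict_left_mono zero_less_numeral)
    then show "0 < v * exp (-y) * exp (-x) * ((1 + A) * exp x - A * exp (2*y))"
      unfolding eq using pos assms by simp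
  }
  {
    fix y assume "y > (x + ln (1 + 1 / A)) / 2"
    hence "exp (2*y) > exp x * (1 + 1/A)" using em by (metis exp_less_cancel_iff mult_strict_left_mono zero_less_numeral)
    then show "v * exp (-y) * exp (-x) * ((1 + A) * exp x - A * exp (2*y)) < 0"
      unfolding eq using pos assms by (simp add: mult_pos_neg)
  }
qed

theorem lemma1:
  fixes x t v :: real and a :: "real \<Rightarrow> real"
  assumes "x > 0" and "t > 0" and "0 < v" and "v \<le> 1"
    and "\<And>y. a y = 1 - v * exp (- y)"
  shows "unimodal_max_at (\<lambda>y. a (x - y) * exp (- v * t * exp (- y)))
           (ln (- v * t + sqrt (v\<^sup>2 * t\<^sup>2 + 4 * t * exp x)) - ln 2)
       \<and> (\<forall>A::real. A > 0 \<longrightarrow>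
           unimodal_max_at (\<lambda>y. a y * (1 + A * a (x - y)))
             ((x + ln (1 + 1 / A)) / 2))"
  using part1[OF assms(2,3), of x] part2[OF assms(3)] by (simp add: assms(5))

end
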